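(* Let $d>2$ be even and $n\ge2$. There is no polynomial $\varphi$ in the coefficients of $f\in\mathbb R[x]_d$ such that $\varphi(f)>0$ for every $f$ in the interior of $P_{n,d}$ and $\varphi(f)=0$ for every $f$ on the boundary of $P_{n,d}$. Consequently, $-\log\varphi(f)$ cannot be a barrier function for $P_{n,d}$ with $\varphi$ a polynomial, and $P_{n,d}$ is not representable by a linear matrix inequality: there is no symmetric matrix pencil $L(f)=\sum_{\alpha\in\mathbb N^n,|\alpha|=d}f_\alpha A_\alpha$ (with $f(x)=\sum_\alpha f_\alpha x^\alpha$ and constant real symmetric matrices $A_\alpha$) such that $P_{n,d}=\{f\in\mathbb R[x]_d: L(f)\succeq0\}$ and $L(f)\succ0$ for all $f$ in the interior of $P_{n,d}$.
   Context: $x=(x_1,\dots,x_n)$; $\mathbb R[x]_d$ is the space of real forms of degree $d$ in $x$, identified with its coefficient vectors $(f_\alpha)_{|\alpha|=d}$. $P_{n,d}=\{f\in\mathbb R[x]_d: f(u)\ge0\ \forall u\in\mathbb R^n\}$; interior and boundary are in the Euclidean topology. A barrier function is a function tending to $+\infty$ at the boundary, here of the form $-\log\varphi$ with $\varphi>0$ on the interior and $\varphi=0$ on the boundary. *)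

theory Defs
  imports Complex_Main
begin

text \<open>Multi-indices alpha in N^n with |alpha| = d, represented as functions nat => nat
  vanishing outside {0..<n}.\<close>
definition multi_idx :: "nat \<Rightarrow> nat \<Rightarrow> (nat \<Rightarrow> nat) set" where
  "multi_idx n d = {\<alpha>. (\<forall>i\<ge>n. \<alpha> i = 0) \<and> (\<Sum>i<n. \<alpha> i) = d}"

text \<open>The space R[x]_d of real forms of degree d in n variables, identified with
  coefficient vectors (f_alpha) indexed by multi_idx n d (zero elsewhere).\<close>
definition forms :: "nat \<Rightarrow> nat \<Rightarrow> ((nat \<Rightarrow> nat) \<Rightarrow> real) set" where
  "forms n d = {f. \<forall>\<alpha>. \<alpha> \<notin> multi_idx n d \<longrightarrow> f \<alpha> = 0}"

definition form_eval :: "nat \<Rightarrow> nat \<Rightarrow> ((nat \<Rightarrow> nat) \<Rightarrow> real) \<Rightarrow> (nat \<Rightarrow> real) \<Rightarrow> real" where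
  "form_eval n d f u = (\<Sum>\<alpha>\<in>multi_idx n d. f \<alpha> * (\<Prod>i<n. u i ^ \<alpha> i))"

definition Pnd :: "nat \<Rightarrow> nat \<Rightarrow> ((nat \<Rightarrow> nat) \<Rightarrow> real) set" where
  "Pnd n d = {f \<in> forms n d. \<forall>u. form_eval n d f u \<ge> 0}"

definition coeff_dist :: "nat \<Rightarrow> nat \<Rightarrow> ((nat \<Rightarrow> nat) \<Rightarrow> real) \<Rightarrow> ((nat \<Rightarrow> nat) \<Rightarrow> real) \<Rightarrow> real" where
  "coeff_dist n d f g = sqrt (\<Sum>\<alpha>\<in>multi_idx n d. (f \<alpha> - g \<alpha>)\<^sup>2)"

definition form_interior :: "nat \<Rightarrow> nat \<Rightarrow> ((nat \<Rightarrow> nat) \<Rightarrow> real) set \<Rightarrow> ((nat \<Rightarrow> nat) \<Rightarrow> real) set" where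
  "form_interior n d S = {f \<in> forms n d. \<exists>e>0. \<forall>g\<in>forms n d. coeff_dist n d f g < e \<longrightarrow> g \<in> S}"

definition form_boundary :: "nat \<Rightarrow> nat \<Rightarrow> ((nat \<Rightarrow> nat) \<Rightarrow> real) set \<Rightarrow> ((nat \<Rightarrow> nat) \<Rightarrow> real) set" where
  "form_boundary n d S = {f \<in> forms n d. \<forall>e>0.
      (\<exists>g\<in>forms n d. coeff_dist n d f g < e \<and> g \<in> S) \<and>
      (\<exists>g\<in>forms n d. coeff_dist n d f g < e \<and> g \<notin> S)}"

definition coeff_polynomial :: "nat \<Rightarrow> nat \<Rightarrow> (((nat \<Rightarrow> nat) \<Rightarrow> real) \<Rightarrow> real) \<Rightarrow> bool" where
  "coeff_polynomial n d \<phi> \<longleftrightarrow>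
     (\<exists>E :: ((nat \<Rightarrow> nat) \<Rightarrow> nat) set. \<exists>c :: ((nat \<Rightarrow> nat) \<Rightarrow> nat) \<Rightarrow> real. finite E \<and>
        (\<forall>f\<in>forms n d. \<phi> f = (\<Sum>\<beta>\<in>E. c \<beta> * (\<Prod>\<alpha>\<in>multi_idx n d. f \<alpha> ^ \<beta> \<alpha>))))"

text \<open>Linear matrix pencil L(f) = sum_alpha f_alpha A_alpha of m x m matrices
  (matrices as nat => nat => real, entries with indices < m).\<close>
definition pencil :: "nat \<Rightarrow> nat \<Rightarrow> ((nat \<Rightarrow> nat) \<Rightarrow> nat \<Rightarrow> nat \<Rightarrow> real) \<Rightarrow> ((nat \<Rightarrow> nat) \<Rightarrow> real) \<Rightarrow> nat \<Rightarrow> nat \<Rightarrow> real" where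
  "pencil n d A f i j = (\<Sum>\<alpha>\<in>multi_idx n d. f \<alpha> * A \<alpha> i j)"

definition sym_mat :: "nat \<Rightarrow> (nat \<Rightarrow> nat \<Rightarrow> real) \<Rightarrow> bool" where
  "sym_mat m M \<longleftrightarrow> (\<forall>i<m. \<forall>j<m. M i j = M j i)"

definition psd_mat :: "nat \<Rightarrow> (nat \<Rightarrow> nat \<Rightarrow> real) \<Rightarrow> bool" where
  "psd_mat m M \<longleftrightarrow> (\<forall>v :: nat \<Rightarrow> real. (\<Sum>i<m. \<Sum>j<m. v i * M i j * v j) \<ge> 0)"

definition pd_mat :: "nat \<Rightarrow> (nat \<Rightarrow> nat \<Rightarrow> real) \<Rightarrow> bool" where
  "pd_mat m M \<longleftrightarrow> (\<forall>v :: nat \<Rightarrow> real. (\<exists>i<m. v i \<noteq> 0) \<longrightarrow> (\<Sum>i<m. \<Sum>j<m. v i * M i j * v j) > 0)"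

end

theory Submission
  imports Defs "HOL-Computational_Algebra.Polynomial" "Jordan_Normal_Form.Determinant"
begin



definition pf :: "(real \<Rightarrow> real) \<Rightarrow> bool" where
  "pf F \<longleftrightarrow> (\<exists>p::real poly. \<forall>s. F s = poly p s)"

lemma pf_const[simp]: "pf (\<lambda>s. c)"
  unfolding pf_def by (rule exI[of _ "[:c:]"]) simp

lemma pf_id[simp]: "pf (\<lambda>s. s)"
  unfolding pf_def by (rule exI[of _ "[:0,1:]"]) simp

lemma pf_poly[simp]: "pf (\<lambda>s. poly p s)"
  unfolding pf_def by blast

lemma pf_add[intro]: "pf F \<Longrightarrow> pf G \<Longrightarrow> pf (\<lambda>s. F s + G s)"
  unfolding pf_def by (metis poly_add)

lemma pf_mult[intro]: "pf F \<Longrightarrow> pf G \<Longrightarrow> pf (\<lambda>s. F s * G s)"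
  unfolding pf_def by (metis poly_mult)

lemma pf_sum[intro]: "(\<And>i. i \<in> I \<Longrightarrow> pf (F i)) \<Longrightarrow> pf (\<lambda>s. \<Sum>i\<in>I. F i s)"
proof (induction I rule: infinite_finite_induct)
  case (insert x F) then show ?case by (simp add: pf_add)
qed auto

lemma pf_prod[intro]: "(\<And>i. i \<in> I \<Longrightarrow> pf (F i)) \<Longrightarrow> pf (\<lambda>s. \<Prod>i\<in>I. F i s)"
proof (induction I rule: infinite_finite_induct)
  case (insert x F) then show ?case by (simp add: pf_mult)
qed auto

lemma pf_power[intro]: "pf F \<Longrightarrow> pf (\<lambda>s. F s ^ k)"
  by (induction k) (auto simp: pf_mult)

lemma pf_zero:
  assumes "pf F" "\<And>s. s > 0 \<Longrightarrow> F s = 0"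
  shows "F x = 0"
proof -
  obtain p where p: "\<And>s. F s = poly p s" using assms(1) unfolding pf_def by blast
  have "p = 0"
  proof (rule ccontr)
    assume "p \<noteq> 0"
    then have "finite {x. poly p x = 0}" by (rule poly_roots_finite)
    moreover have "{0<..} \<subseteq> {x. poly p x = 0}" using assms(2) p by auto
    ultimately have "finite {0::real<..}" by (rule finite_subset[rotated])
    then show False using infinite_Ioi by blast
  qed
  then show ?thesis using p by simp
qed




lemma finite_multi_idx: "finite (multi_idx n d)"
proof -
  have "multi_idx n d \<subseteq> {f. \<forall>x. (x \<in> {..<n} \<longrightarrow> f x \<in> {..d}) \<and> (x \<notin> {..<n} \<longrightarrow> f x = 0)}"
  proof
    fix \<alpha> assume a: "\<alpha> \<in> multi_idx n d"
    then have s: "(\<Sum>i<n. \<alpha> i) = d" and z: "\<forall>i\<ge>n. \<alpha> i = 0" by (auto simp: multi_idx_def)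
    { fix x assume "x < n"
      then have "\<alpha> x \<le> (\<Sum>i<n. \<alpha> i)" by (intro member_le_sum) auto
      then have "\<alpha> x \<le> d" using s by simp }
    then show "\<alpha> \<in> {f. \<forall>x. (x \<in> {..<n} \<longrightarrow> f x \<in> {..d}) \<and> (x \<notin> {..<n} \<longrightarrow> f x = 0)}"
      using z by auto
  qed
  then show ?thesis by (rule finite_subset) (rule finite_set_of_finite_funs; simp)
qed

definition mnm :: "nat \<Rightarrow> (nat \<Rightarrow> real) \<Rightarrow> (nat \<Rightarrow> nat) \<Rightarrow> real" where
  "mnm n u \<beta> = (\<Prod>i<n. u i ^ \<beta> i)"

type_synonym tm = "(real poly \<times> (nat \<Rightarrow> nat)) list"

definition tev :: "nat \<Rightarrow> tm \<Rightarrow> real \<Rightarrow> (nat \<Rightarrow> real) \<Rightarrow> real" where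
  "tev n T s u = (\<Sum>x\<leftarrow>T. poly (fst x) s * mnm n u (snd x))"

definition tco :: "tm \<Rightarrow> real \<Rightarrow> (nat \<Rightarrow> nat) \<Rightarrow> real" where
  "tco T s \<alpha> = (\<Sum>x\<leftarrow>T. if snd x = \<alpha> then poly (fst x) s else 0)"

definition tmul :: "tm \<Rightarrow> tm \<Rightarrow> tm" where
  "tmul T1 T2 = concat (map (\<lambda>x. map (\<lambda>y. (fst x * fst y, \<lambda>i. snd x i + snd y i)) T2) T1)"

fun tpow :: "tm \<Rightarrow> nat \<Rightarrow> tm" where
  "tpow T 0 = [(1, \<lambda>_. 0)]"
| "tpow T (Suc k) = tmul T (tpow T k)"

definition tdeg :: "nat \<Rightarrow> nat \<Rightarrow> tm \<Rightarrow> bool" where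
  "tdeg n d T \<longleftrightarrow> (\<forall>x\<in>set T. snd x \<in> multi_idx n d)"

lemma tev_append[simp]: "tev n (T1 @ T2) s u = tev n T1 s u + tev n T2 s u"
  by (simp add: tev_def)

lemma tco_append[simp]: "tco (T1 @ T2) s \<alpha> = tco T1 s \<alpha> + tco T2 s \<alpha>"
  by (simp add: tco_def)

lemma mnm_add: "mnm n u (\<lambda>i. a i + b i) = mnm n u a * mnm n u b"
  by (simp add: mnm_def power_add prod.distrib)

lemma tev_map: "tev n (map (\<lambda>y. (fst x * fst y, \<lambda>i. snd x i + snd y i)) T) s u
   = poly (fst x) s * mnm n u (snd x) * tev n T s u"
  by (induction T) (auto simp: tev_def mnm_add algebra_simps)

lemma tev_tmul[simp]: "tev n (tmul T1 T2) s u = tev n T1 s u * tev n T2 s u"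
proof (induction T1)
  case Nil then show ?case by (simp add: tmul_def tev_def)
next
  case (Cons x T1)
  have "tmul (x # T1) T2 = map (\<lambda>y. (fst x * fst y, \<lambda>i. snd x i + snd y i)) T2 @ tmul T1 T2"
    by (simp add: tmul_def)
  then show ?case using Cons by (simp add: tev_map) (simp add: tev_def algebra_simps)
qed

lemma mnm_zero[simp]: "mnm n u (\<lambda>_. 0) = 1" by (simp add: mnm_def)

lemma tev_tpow[simp]: "tev n (tpow T k) s u = tev n T s u ^ k"
proof (induction k)
  case 0 then show ?case by (simp add: tev_def)
qed simp

lemma tdeg_append[intro]: "tdeg n d T1 \<Longrightarrow> tdeg n d T2 \<Longrightarrow> tdeg n d (T1 @ T2)"
  by (auto simp: tdeg_def)

lemma tdeg_tmul[intro]: "tdeg n d1 T1 \<Longrightarrow> tdeg n d2 T2 \<Longrightarrow> tdeg n (d1 + d2) (tmul T1 T2)"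
  by (auto simp: tdeg_def tmul_def multi_idx_def sum.distrib)

lemma tdeg_tpow[intro]: "tdeg n d T \<Longrightarrow> tdeg n (d * k) (tpow T k)"
proof (induction k)
  case 0 then show ?case by (simp add: tdeg_def multi_idx_def)
next
  case (Suc k)
  then have "tdeg n (d + d * k) (tmul T (tpow T k))" by blast
  then show ?case by simp
qed

lemma tco_Cons: "tco (x # T) s \<alpha> = (if snd x = \<alpha> then poly (fst x) s else 0) + tco T s \<alpha>"
  by (simp add: tco_def)

lemma tco_forms: "tdeg n d T \<Longrightarrow> tco T s \<in> forms n d"
proof (induction T)
  case Nil then show ?case by (simp add: forms_def tco_def)
next
  case (Cons x T)
  then have "tdeg n d T" "snd x \<in> multi_idx n d" by (auto simp: tdeg_def)
  with Cons.IH show ?case by (auto simp: forms_def tco_Cons)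
qed




lemma form_eval_mnm: "form_eval n d f u = (\<Sum>\<alpha>\<in>multi_idx n d. f \<alpha> * mnm n u \<alpha>)"
  by (simp add: form_eval_def mnm_def)

lemma form_eval_tco: "tdeg n d T \<Longrightarrow> form_eval n d (tco T s) u = tev n T s u"
proof (induction T)
  case Nil then show ?case by (simp add: form_eval_def tco_def tev_def)
next
  case (Cons x T)
  then have T: "tdeg n d T" and x: "snd x \<in> multi_idx n d" by (auto simp: tdeg_def)
  have "form_eval n d (tco (x # T) s) u =
     (\<Sum>\<alpha>\<in>multi_idx n d. (if snd x = \<alpha> then poly (fst x) s * mnm n u \<alpha> else 0)) + form_eval n d (tco T s) u"
    unfolding form_eval_mnm tco_Cons by (subst sum.distrib[symmetric]) (rule sum.cong; auto simp: distrib_right)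
  also have "\<dots> = poly (fst x) s * mnm n u (snd x) + tev n T s u"
    using x Cons.IH[OF T] finite_multi_idx by simp
  finally show ?case by (simp add: tev_def)
qed

lemma pf_tco: "pf (\<lambda>s. tco T s \<alpha>)"
proof (induction T)
  case Nil then show ?case by (simp add: tco_def)
next
  case (Cons x T) then show ?case by (cases "snd x = \<alpha>") (auto simp: tco_Cons)
qed

definition sq :: "nat \<Rightarrow> nat \<Rightarrow> nat" where "sq i = (\<lambda>j. if j = i then 2 else 0)"

lemma sq_idx: "i < n \<Longrightarrow> sq i \<in> multi_idx n 2"
  by (auto simp: multi_idx_def sq_def)

lemma mnm_sq: "i < n \<Longrightarrow> mnm n u (sq i) = u i ^ 2"
proof -
  assume i: "i < n"
  have "mnm n u (sq i) = (\<Prod>j<n. if j = i then u i ^ 2 else 1)"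
    unfolding mnm_def sq_def by (rule prod.cong) auto
  then show ?thesis using i by simp
qed

definition Qt :: tm where "Qt = [(1, sq 0), (-[:0,1:], sq 1)]"
definition St :: "nat \<Rightarrow> tm" where "St n = map (\<lambda>i. (1, sq i)) [0..<n]"
definition Bt :: "nat \<Rightarrow> tm" where "Bt n = map (\<lambda>i. (1, sq i)) [2..<n]"

lemma tev_Qt: "n \<ge> 2 \<Longrightarrow> tev n Qt s u = u 0 ^ 2 - s * u 1 ^ 2"
  by (simp add: tev_def Qt_def mnm_sq)

lemma tev_St: "tev n (St n) s u = (\<Sum>i<n. u i ^ 2)"
proof -
  have "tev n (St n) s u = (\<Sum>i\<leftarrow>[0..<n]. mnm n u (sq i))"
    by (simp add: tev_def St_def o_def)
  also have "\<dots> = (\<Sum>i\<in>{0..<n}. mnm n u (sq i))" by (simp add: sum_list_distinct_conv_sum_set)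
  also have "\<dots> = (\<Sum>i<n. u i ^ 2)" by (rule sum.cong) (auto simp: mnm_sq)
  finally show ?thesis .
qed

lemma tev_Bt: "tev n (Bt n) s u = (\<Sum>i\<in>{2..<n}. u i ^ 2)"
proof -
  have "tev n (Bt n) s u = (\<Sum>i\<leftarrow>[2..<n]. mnm n u (sq i))"
    by (simp add: tev_def Bt_def o_def)
  also have "\<dots> = (\<Sum>i\<in>{2..<n}. mnm n u (sq i))" by (simp add: sum_list_distinct_conv_sum_set)
  also have "\<dots> = (\<Sum>i\<in>{2..<n}. u i ^ 2)" by (rule sum.cong) (auto simp: mnm_sq)
  finally show ?thesis .
qed

lemma tdeg_Qt: "n \<ge> 2 \<Longrightarrow> tdeg n 2 Qt"
  by (auto simp: tdeg_def Qt_def intro!: sq_idx)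

lemma tdeg_St: "tdeg n 2 (St n)"
  by (auto simp: tdeg_def St_def intro!: sq_idx)

lemma tdeg_Bt: "tdeg n 2 (Bt n)"
  by (auto simp: tdeg_def Bt_def intro!: sq_idx)

definition Ft :: "nat \<Rightarrow> nat \<Rightarrow> tm" where
  "Ft n k = tmul (tpow Qt 2) (tpow (St n) k) @ tpow (Bt n) (k + 2)"

lemma tdeg_Ft: "n \<ge> 2 \<Longrightarrow> tdeg n (2 * k + 4) (Ft n k)"
proof -
  assume n: "n \<ge> 2"
  have a: "tdeg n (2 * 2 + 2 * k) (tmul (tpow Qt 2) (tpow (St n) k))"
    using tdeg_Qt[OF n] tdeg_St by blast
  have b: "tdeg n (2 * (k + 2)) (tpow (Bt n) (k + 2))" using tdeg_Bt by blast
  have e1: "2 * 2 + 2 * k = 2 * k + 4" and e2: "2 * (k + 2) = 2 * k + 4" by simp_all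
  show ?thesis unfolding Ft_def by (intro tdeg_append) (use a b in \<open>simp_all only: e1 e2\<close>)
qed

lemma tev_Ft: "n \<ge> 2 \<Longrightarrow> tev n (Ft n k) s u =
   (u 0 ^ 2 - s * u 1 ^ 2) ^ 2 * (\<Sum>i<n. u i ^ 2) ^ k + (\<Sum>i\<in>{2..<n}. u i ^ 2) ^ (k + 2)"
  by (simp add: Ft_def tev_Qt tev_St tev_Bt)




definition gam :: "nat \<Rightarrow> nat \<Rightarrow> nat" where "gam d = (\<lambda>i. if i = 1 then d else 0)"

lemma gam_idx: "n \<ge> 2 \<Longrightarrow> gam d \<in> multi_idx n d"
  by (auto simp: multi_idx_def gam_def)

lemma mnm_gam: "n \<ge> 2 \<Longrightarrow> mnm n u (gam d) = u 1 ^ d"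
proof -
  assume n: "n \<ge> 2"
  have "mnm n u (gam d) = (\<Prod>j<n. if j = 1 then u 1 ^ d else 1)"
    unfolding mnm_def gam_def by (rule prod.cong) auto
  then show ?thesis using n by simp
qed

lemma sum_split2: fixes n :: nat shows "n \<ge> 2 \<Longrightarrow> (\<Sum>i<n. g i) = g 0 + g 1 + (\<Sum>i\<in>{2..<n}. (g i :: real))"
proof -
  assume n: "n \<ge> 2"
  have "{..<n} = {0,1} \<union> {2..<n}" using n by auto
  then show ?thesis by simp
qed

lemma lower_bound:
  fixes a b :: real
  assumes a: "a \<ge> 0" and b: "b \<ge> 0"
  shows "a^2 * (a+b)^k + b^(k+2) \<ge> (a+b)^(k+2) / 2^(k+2)"
proof -
  have eq: "(a+b)^(k+2) / 2^(k+2) = ((a+b)/2)^(k+2)" by (rule power_divide[symmetric])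
  show ?thesis
  proof (cases "a \<ge> b")
    case True
    have h: "(a+b)/2 \<le> a" "0 \<le> (a+b)/2" using True a b by auto
    have "((a+b)/2)^(k+2) = ((a+b)/2)^2 * ((a+b)/2)^k" by (metis power_add mult.commute)
    also have "\<dots> \<le> a^2 * (a+b)^k"
      using h a b by (intro mult_mono power_mono) auto
    finally have c: "((a+b)/2)^(k+2) \<le> a^2 * (a+b)^k" .
    have "b^(k+2) \<ge> 0" using b by simp
    then show ?thesis using c eq by linarith
  next
    case False
    have "((a+b)/2)^(k+2) \<le> b^(k+2)" using False a b by (intro power_mono) auto
    moreover have "a^2 * (a+b)^k \<ge> 0" using a b by simp
    ultimately show ?thesis unfolding eq by linarith
  qed
qed

context
  fixes n k :: nat
  assumes n: "n \<ge> 2"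
begin

abbreviation "dd \<equiv> 2 * k + 4"

definition ff :: "real \<Rightarrow> (nat \<Rightarrow> nat) \<Rightarrow> real" where "ff s = tco (Ft n k) s"

definition gg :: "real \<Rightarrow> real \<Rightarrow> (nat \<Rightarrow> nat) \<Rightarrow> real" where
  "gg s e = tco (Ft n k @ [([:-e:], gam dd)]) s"

lemma tdeg_gg: "tdeg n dd (Ft n k @ [([:-e:], gam dd)])"
  using tdeg_Ft[OF n] gam_idx[OF n] by (auto simp: tdeg_def)

lemma ff_forms: "ff s \<in> forms n dd" unfolding ff_def by (rule tco_forms[OF tdeg_Ft[OF n]])
lemma gg_forms: "gg s e \<in> forms n dd" unfolding gg_def by (rule tco_forms[OF tdeg_gg])

lemma ff_eval: "form_eval n dd (ff s) u =
   (u 0 ^ 2 - s * u 1 ^ 2) ^ 2 * (\<Sum>i<n. u i ^ 2) ^ k + (\<Sum>i\<in>{2..<n}. u i ^ 2) ^ (k + 2)"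
  unfolding ff_def by (simp add: form_eval_tco[OF tdeg_Ft[OF n]] tev_Ft[OF n])

lemma gg_eval: "form_eval n dd (gg s e) u = form_eval n dd (ff s) u - e * u 1 ^ dd"
  unfolding gg_def ff_def using n
  by (simp add: form_eval_tco[OF tdeg_Ft[OF n]] form_eval_tco[OF tdeg_gg] tev_def mnm_gam)

lemma gg_coeff: "gg s e \<alpha> = ff s \<alpha> - e * (if \<alpha> = gam dd then 1 else 0)"
  unfolding gg_def ff_def by (simp add: tco_def)

lemma ff_Pnd: "ff s \<in> Pnd n dd"
proof -
  have "form_eval n dd (ff s) u \<ge> 0" for u
    unfolding ff_eval by (intro add_nonneg_nonneg mult_nonneg_nonneg zero_le_power2 zero_le_power sum_nonneg)
  then show ?thesis unfolding Pnd_def using ff_forms by auto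
qed

definition ustar :: "real \<Rightarrow> nat \<Rightarrow> real" where
  "ustar s = (\<lambda>i. if i = 0 then sqrt s else if i = 1 then 1 else 0)"

lemma ff_zero: "s > 0 \<Longrightarrow> form_eval n dd (ff s) (ustar s) = 0"
  by (simp add: ff_eval ustar_def)

lemma gg_neg: "s > 0 \<Longrightarrow> form_eval n dd (gg s e) (ustar s) = - e"
  by (simp add: gg_eval ff_zero) (simp add: ustar_def)

lemma dist_gg: "e \<ge> 0 \<Longrightarrow> coeff_dist n dd (ff s) (gg s e) = e"
proof -
  assume e: "e \<ge> 0"
  have "(\<Sum>\<alpha>\<in>multi_idx n dd. (ff s \<alpha> - gg s e \<alpha>)\<^sup>2) = (\<Sum>\<alpha>\<in>multi_idx n dd. if \<alpha> = gam dd then e^2 else 0)"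
    by (rule sum.cong) (auto simp: gg_coeff)
  also have "\<dots> = e^2" using gam_idx[OF n] finite_multi_idx by simp
  finally show ?thesis unfolding coeff_dist_def using e by simp
qed

lemma ff_boundary: "s > 0 \<Longrightarrow> ff s \<in> form_boundary n dd (Pnd n dd)"
  unfolding form_boundary_def
proof (intro CollectI conjI allI impI ff_forms)
  fix e :: real assume s: "s > 0" and e: "e > 0"
  show "\<exists>g\<in>forms n dd. coeff_dist n dd (ff s) g < e \<and> g \<in> Pnd n dd"
    using ff_forms ff_Pnd e by (intro bexI[of _ "ff s"]) (auto simp: coeff_dist_def)
  have "gg s (e/2) \<notin> Pnd n dd"
    unfolding Pnd_def using gg_neg[OF s, of "e/2"] e by (auto intro!: exI[of _ "ustar s"])
  then show "\<exists>g\<in>forms n dd. coeff_dist n dd (ff s) g < e \<and> g \<notin> Pnd n dd"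
    using gg_forms dist_gg[of "e/2" s] e by (intro bexI[of _ "gg s (e/2)"]) auto
qed


lemma mnm_bound:
  assumes a: "\<alpha> \<in> multi_idx n dd"
  shows "\<bar>mnm n u \<alpha>\<bar> \<le> (\<Sum>i<n. u i ^ 2) ^ (k + 2)"
proof -
  let ?S = "\<Sum>i<n. u i ^ 2"
  have sa: "(\<Sum>i<n. \<alpha> i) = dd" using a by (simp add: multi_idx_def)
  have ui: "\<bar>u i\<bar> \<le> sqrt ?S" if "i < n" for i
  proof -
    have "u i ^ 2 \<le> ?S" using that by (intro member_le_sum) auto
    then have "sqrt (u i ^ 2) \<le> sqrt ?S" by (rule real_sqrt_le_mono)
    then show ?thesis by simp
  qed
  have "\<bar>mnm n u \<alpha>\<bar> = (\<Prod>i<n. \<bar>u i\<bar> ^ \<alpha> i)" by (simp add: mnm_def abs_prod power_abs)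
  also have "\<dots> \<le> (\<Prod>i<n. sqrt ?S ^ \<alpha> i)"
    by (intro prod_mono conjI power_mono ui) auto
  also have "\<dots> = sqrt ?S ^ dd" by (simp add: power_sum[symmetric] sa)
  also have "\<dots> = (sqrt ?S ^ 2) ^ (k + 2)" proof -
    have "(2::nat) * k + 4 = 2 * (k + 2)" by simp
    then show ?thesis by (simp only: power_mult)
  qed
  also have "\<dots> = ?S ^ (k + 2)" by (simp add: sum_nonneg)
  finally show ?thesis .
qed

lemma coeff_le_dist:
  assumes "\<alpha> \<in> multi_idx n dd"
  shows "\<bar>g \<alpha> - f \<alpha>\<bar> \<le> coeff_dist n dd f g"
proof -
  have "(f \<alpha> - g \<alpha>)^2 \<le> (\<Sum>\<beta>\<in>multi_idx n dd. (f \<beta> - g \<beta>)\<^sup>2)"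
    using assms finite_multi_idx by (intro member_le_sum) auto
  then have "sqrt ((f \<alpha> - g \<alpha>)^2) \<le> coeff_dist n dd f g"
    unfolding coeff_dist_def by (rule real_sqrt_le_mono)
  then show ?thesis by simp
qed

lemma ff_interior: "ff (-1) \<in> form_interior n dd (Pnd n dd)"
proof -
  define N where "N = card (multi_idx n dd)"
  define e0 :: real where "e0 = 1 / (2^(k+2) * (N+1))"
  have e0: "e0 > 0" by (simp add: e0_def add_pos_nonneg)
  have Ne0: "N * e0 \<le> 1 / 2^(k+2)"
  proof -
    have "N * e0 = (N / (N+1)) * (1 / 2^(k+2))" by (simp add: e0_def algebra_simps)
    also have "\<dots> \<le> 1 * (1 / 2^(k+2))" by (intro mult_right_mono) auto
    finally show ?thesis by simp
  qed
  have main: "form_eval n dd g u \<ge> 0" if g: "g \<in> forms n dd" and dg: "coeff_dist n dd (ff (-1)) g < e0" for g u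
  proof -
    let ?f = "ff (-1)"
    let ?S = "\<Sum>i<n. u i ^ 2"
    let ?B = "\<Sum>i\<in>{2..<n}. u i ^ 2"
    have S0: "?S \<ge> 0" by (simp add: sum_nonneg)
    have h1: "form_eval n dd g u = form_eval n dd ?f u + (\<Sum>\<alpha>\<in>multi_idx n dd. (g \<alpha> - ?f \<alpha>) * mnm n u \<alpha>)"
      unfolding form_eval_mnm by (simp add: sum.distrib[symmetric] algebra_simps)
    have "\<bar>\<Sum>\<alpha>\<in>multi_idx n dd. (g \<alpha> - ?f \<alpha>) * mnm n u \<alpha>\<bar> \<le> (\<Sum>\<alpha>\<in>multi_idx n dd. \<bar>(g \<alpha> - ?f \<alpha>) * mnm n u \<alpha>\<bar>)"
      by (rule sum_abs)
    also have "\<dots> \<le> (\<Sum>\<alpha>\<in>multi_idx n dd. coeff_dist n dd ?f g * ?S ^ (k+2))"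
      unfolding abs_mult by (intro sum_mono mult_mono coeff_le_dist mnm_bound) (auto simp: coeff_dist_def sum_nonneg)
    also have "\<dots> = N * coeff_dist n dd ?f g * ?S ^ (k+2)" by (simp add: N_def)
    also have "\<dots> \<le> N * e0 * ?S ^ (k+2)" using dg S0 by (intro mult_right_mono mult_left_mono) auto
    also have "\<dots> \<le> ?S ^ (k+2) / 2^(k+2)" using Ne0 S0
      by (metis divide_inverse inverse_eq_divide mult.commute mult_right_mono mult_1 zero_le_power)
    finally have h4: "\<bar>\<Sum>\<alpha>\<in>multi_idx n dd. (g \<alpha> - ?f \<alpha>) * mnm n u \<alpha>\<bar> \<le> ?S ^ (k+2) / 2^(k+2)" .
    have Ssplit: "?S = (u 0 ^ 2 + u 1 ^ 2) + ?B" using sum_split2[OF n] by simp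
    have "form_eval n dd ?f u = (u 0 ^ 2 + u 1 ^ 2) ^ 2 * ?S ^ k + ?B ^ (k + 2)"
      by (simp add: ff_eval)
    also have "\<dots> \<ge> ?S ^ (k+2) / 2^(k+2)"
      unfolding Ssplit by (rule lower_bound) (auto simp: sum_nonneg)
    finally have h5: "form_eval n dd ?f u \<ge> ?S ^ (k+2) / 2^(k+2)" .
    show ?thesis using h1 h4 h5 by linarith
  qed
  show ?thesis unfolding form_interior_def Pnd_def using ff_forms e0 main by blast
qed
end



abbreviation qf :: "nat \<Rightarrow> (nat \<Rightarrow> nat \<Rightarrow> real) \<Rightarrow> (nat \<Rightarrow> real) \<Rightarrow> real" where
  "qf m M v \<equiv> (\<Sum>i<m. \<Sum>j<m. v i * M i j * v j)"

abbreviation nsq :: "nat \<Rightarrow> (nat \<Rightarrow> real) \<Rightarrow> real" where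
  "nsq m v \<equiv> (\<Sum>i<m. v i ^ 2)"

lemma vv_bound:
  assumes "i < m" "j < m"
  shows "\<bar>v i * v j\<bar> \<le> nsq m (v :: nat \<Rightarrow> real)"
proof -
  have "v i ^ 2 \<le> nsq m v" "v j ^ 2 \<le> nsq m v" using assms by (auto intro!: member_le_sum)
  moreover have "2 * \<bar>v i * v j\<bar> \<le> v i ^ 2 + v j ^ 2"
  proof -
    have "0 \<le> (\<bar>v i\<bar> - \<bar>v j\<bar>)^2" by simp
    then show ?thesis by (simp add: power2_eq_square algebra_simps abs_mult)
  qed
  ultimately show ?thesis by linarith
qed

lemma qf_bound: "\<bar>qf m H v\<bar> \<le> (\<Sum>i<m. \<Sum>j<m. \<bar>H i j\<bar>) * nsq m v"
proof -
  have "\<bar>qf m H v\<bar> \<le> (\<Sum>i<m. \<bar>\<Sum>j<m. v i * H i j * v j\<bar>)" by (rule sum_abs)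
  also have "\<dots> \<le> (\<Sum>i<m. \<Sum>j<m. \<bar>v i * H i j * v j\<bar>)" by (intro sum_mono sum_abs)
  also have "\<dots> \<le> (\<Sum>i<m. \<Sum>j<m. \<bar>H i j\<bar> * nsq m v)"
  proof (intro sum_mono)
    fix i j assume "i \<in> {..<m}" "j \<in> {..<m}"
    then have "\<bar>v i * v j\<bar> \<le> nsq m v" by (intro vv_bound) auto
    then have "\<bar>H i j\<bar> * \<bar>v i * v j\<bar> \<le> \<bar>H i j\<bar> * nsq m v" by (intro mult_left_mono) auto
    then show "\<bar>v i * H i j * v j\<bar> \<le> \<bar>H i j\<bar> * nsq m v" by (simp add: abs_mult algebra_simps)
  qed
  also have "\<dots> = (\<Sum>i<m. \<Sum>j<m. \<bar>H i j\<bar>) * nsq m v" by (simp add: sum_distrib_right)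
  finally show ?thesis .
qed

lemma qf_Suc:
  assumes "sym_mat (Suc m) M"
  shows "qf (Suc m) M v = qf m M v + 2 * v m * (\<Sum>i<m. M i m * v i) + M m m * v m ^ 2"
proof -
  have s: "M m j = M j m" if "j < m" for j using assms that by (auto simp: sym_mat_def)
  have "qf (Suc m) M v = qf m M v + (\<Sum>i<m. v i * M i m * v m) + ((\<Sum>j<m. v m * M m j * v j) + v m * M m m * v m)"
    by (simp add: sum.distrib)
  also have "(\<Sum>j<m. v m * M m j * v j) = (\<Sum>j<m. v m * (M j m * v j))"
    by (rule sum.cong) (auto simp: s)
  finally show ?thesis
    by (simp add: sum_distrib_left sum_distrib_right power2_eq_square algebra_simps)
qed

lemma qf_delta: "k < m \<Longrightarrow> qf m M (\<lambda>i. if i = k then 1 else 0) = M k k"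
proof -
  assume k: "k < m"
  have 1: "(\<Sum>j<m. x * M i j * (if j = k then 1 else 0)) = x * M i k" for x i
    using k by (simp add: sum.remove[of "{..<m}" k])
  have "qf m M (\<lambda>i. if i = k then 1 else 0) = (\<Sum>i<m. (if i = k then 1 else 0) * M i k)"
    by (simp only: 1)
  also have "\<dots> = M k k" using k by (simp add: sum.remove[of "{..<m}" k])
  finally show ?thesis .
qed

lemma pd_bound:
  "sym_mat m M \<Longrightarrow> pd_mat m M \<Longrightarrow> \<exists>c>0. \<forall>v. qf m M v \<ge> c * nsq m v"
proof (induction m arbitrary: M)
  case 0 then show ?case by (intro exI[of _ 1]) simp
next
  case (Suc m)
  define a where "a = M m m"
  define b where "b i = M i m" for i
  define L where "L v = (\<Sum>i<m. b i * v i)" for v :: "nat \<Rightarrow> real"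
  define M' where "M' i j = M i j - b i * b j / a" for i j
  have "\<exists>i<Suc m. (\<lambda>i. if i = m then 1 else (0::real)) i \<noteq> 0" by auto
  then have "0 < qf (Suc m) M (\<lambda>i. if i = m then 1 else 0)"
    by (rule Suc.prems(2)[unfolded pd_mat_def, rule_format])
  then have a: "a > 0" unfolding a_def qf_delta[OF lessI] .
  have qM': "qf m M' v = qf m M v - L v ^ 2 / a" for v
  proof -
    have "qf m M' v = qf m M v - (\<Sum>i<m. \<Sum>j<m. (b i * v i) * (b j * v j)) / a"
      unfolding M'_def by (simp add: algebra_simps sum_subtractf sum_divide_distrib)
    also have "(\<Sum>i<m. \<Sum>j<m. (b i * v i) * (b j * v j)) = L v ^ 2"
      unfolding L_def power2_eq_square by (simp add: sum_product)
    finally show ?thesis .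
  qed
  have key: "qf (Suc m) M v = qf m M' v + a * (v m + L v / a) ^ 2" for v
  proof -
    have "a * (v m + L v / a) ^ 2 = a * v m ^ 2 + 2 * v m * L v + L v ^ 2 / a"
      using a by (simp add: field_simps power2_eq_square)
    moreover have "L v = (\<Sum>i<m. M i m * v i)" unfolding L_def b_def ..
    ultimately show ?thesis unfolding qM' qf_Suc[OF Suc.prems(1)] a_def by simp
  qed
  have symM': "sym_mat m M'"
    using Suc.prems(1) by (auto simp: sym_mat_def M'_def b_def mult.commute)
  have pdM': "pd_mat m M'"
    unfolding pd_mat_def
  proof (intro allI impI)
    fix v :: "nat \<Rightarrow> real" assume "\<exists>i<m. v i \<noteq> 0"
    then obtain i where i: "i < m" "v i \<noteq> 0" by blast
    define v' where "v' = v(m := - L v / a)"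
    have Lv': "L v' = L v" unfolding L_def v'_def by (rule sum.cong) auto
    have qv': "qf m M' v' = qf m M' v" unfolding v'_def by (intro sum.cong) auto
    have "\<exists>i<Suc m. v' i \<noteq> 0" using i by (intro exI[of _ i]) (simp add: v'_def)
    then have "qf (Suc m) M v' > 0"
      by (rule Suc.prems(2)[unfolded pd_mat_def, rule_format])
    then show "qf m M' v > 0" unfolding key Lv' qv' using a by (simp add: v'_def)
  qed
  obtain c' where c': "c' > 0" "\<And>v. qf m M' v \<ge> c' * nsq m v"
    using Suc.IH[OF symM' pdM'] by blast
  define Bb where "Bb = (\<Sum>i<m. \<Sum>j<m. \<bar>b i * b j\<bar>)"
  have Bb0: "Bb \<ge> 0" unfolding Bb_def by (intro sum_nonneg) auto
  have LB: "L v ^ 2 \<le> Bb * nsq m v" for v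
  proof -
    have "L v ^ 2 = qf m (\<lambda>i j. b i * b j) v"
      unfolding L_def power2_eq_square by (simp add: sum_product algebra_simps)
    also have "\<dots> \<le> \<bar>qf m (\<lambda>i j. b i * b j) v\<bar>" by simp
    also have "\<dots> \<le> Bb * nsq m v" unfolding Bb_def by (rule qf_bound)
    finally show ?thesis .
  qed
  define K where "K = 1 + 2 * Bb / a^2"
  have K: "K \<ge> 1" unfolding K_def using Bb0 a by simp
  define c where "c = min (c' / K) (a / 2)"
  have c0: "c > 0" unfolding c_def using c' a K by simp
  show ?case
  proof (intro exI[of _ c] conjI allI c0)
    fix v :: "nat \<Rightarrow> real"
    define w where "w = v m + L v / a"
    define V where "V = nsq m v"
    have V0: "V \<ge> 0" unfolding V_def by (simp add: sum_nonneg)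
    have vm: "v m ^ 2 \<le> 2 * w ^ 2 + 2 * (L v / a) ^ 2"
    proof -
      have "v m = w - L v / a" unfolding w_def by simp
      moreover have "(x - y) ^ 2 \<le> 2 * x ^ 2 + 2 * y ^ 2" for x y :: real
      proof -
        have "0 \<le> (x + y) ^ 2" by simp
        then show ?thesis by (simp add: power2_eq_square algebra_simps)
      qed
      ultimately show ?thesis by simp
    qed
    have "(L v / a) ^ 2 = L v ^ 2 / a ^ 2" by (simp add: power_divide)
    also have "\<dots> \<le> Bb * V / a ^ 2" using LB[of v] a unfolding V_def by (simp add: divide_right_mono)
    finally have "v m ^ 2 \<le> 2 * w ^ 2 + 2 * (Bb * V / a ^ 2)" using vm by linarith
    then have vm2: "v m ^ 2 \<le> 2 * w ^ 2 + (K - 1) * V" unfolding K_def by (simp add: field_simps)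
    have ns: "nsq (Suc m) v = V + v m ^ 2" unfolding V_def by simp
    have "c * nsq (Suc m) v \<le> c * (K * V + 2 * w ^ 2)"
      unfolding ns using vm2 c0 by (intro mult_left_mono) (auto simp: algebra_simps)
    also have "\<dots> = (c * K) * V + (2 * c) * w ^ 2" by (simp add: algebra_simps)
    also have "\<dots> \<le> c' * V + a * w ^ 2"
    proof (intro add_mono mult_right_mono)
      have "c \<le> c' / K" unfolding c_def by simp
      then show "c * K \<le> c'" using K by (simp add: field_simps)
      show "2 * c \<le> a" unfolding c_def by simp
    qed (auto simp: V0)
    also have "\<dots> \<le> qf m M' v + a * w ^ 2" using c'(2)[of v] unfolding V_def by simp
    also have "\<dots> = qf (Suc m) M v" unfolding key w_def ..
    finally show "c * nsq (Suc m) v \<le> qf (Suc m) M v" .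
  qed
qed




lemma qf_expand:
  "qf m M (\<lambda>j. v j + t * x j) = qf m M v + t * ((\<Sum>i<m. \<Sum>j<m. x i * M i j * v j) + (\<Sum>i<m. \<Sum>j<m. v i * M i j * x j)) + t^2 * qf m M x"
  by (simp add: algebra_simps sum.distrib sum_distrib_left power2_eq_square)

lemma psd_kernel:
  assumes sym: "sym_mat m M" and psd: "psd_mat m M" and q: "qf m M v = 0" and i: "i < m"
  shows "(\<Sum>j<m. M i j * v j) = 0"
proof -
  define r where "r = (\<Sum>j<m. M i j * v j)"
  define x where "x = (\<lambda>j. if j = i then 1 else (0::real))"
  define p where "p = M i i"
  have s1: "(\<Sum>i'<m. \<Sum>j<m. x i' * M i' j * v j) = r"
    unfolding x_def r_def using i by (simp add: sum.remove[of "{..<m}" i])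
  have "(\<Sum>i'<m. \<Sum>j<m. v i' * M i' j * x j) = (\<Sum>i'<m. v i' * M i' i)"
    unfolding x_def using i by (intro sum.cong refl) (simp add: sum.remove[of "{..<m}" i])
  also have "\<dots> = r" unfolding r_def using sym i by (intro sum.cong refl) (auto simp: sym_mat_def)
  finally have s2: "(\<Sum>i'<m. \<Sum>j<m. v i' * M i' j * x j) = r" .
  have qx: "qf m M x = p" unfolding x_def p_def by (rule qf_delta[OF i])
  have "0 \<le> qf m M x" by (rule psd[unfolded psd_mat_def, rule_format])
  then have p0: "p \<ge> 0" unfolding qx .
  define t where "t = - r / (p + 1)"
  have "0 \<le> qf m M (\<lambda>j. v j + t * x j)" by (rule psd[unfolded psd_mat_def, rule_format])
  also have "\<dots> = 2 * t * r + t^2 * p" unfolding qf_expand q s1 s2 qx by simp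
  finally have h0: "0 \<le> 2 * t * r + t^2 * p" .
  have tp: "t * (p + 1) = - r" unfolding t_def using p0 by simp
  have "(p+1)^2 * (2*t*r + t^2*p) = 2*r*(p+1)*(t*(p+1)) + p*(t*(p+1))^2"
    by (simp add: algebra_simps power2_eq_square)
  also have "\<dots> = - (r^2 * (p + 2))" unfolding tp by (simp add: algebra_simps power2_eq_square)
  finally have "0 \<le> - (r^2 * (p + 2))" using h0 by (metis zero_le_mult_iff zero_le_power2)
  then have "r^2 * (p + 2) \<le> 0" by simp
  then have "r^2 \<le> 0" using p0 by (simp add: mult_le_0_iff)
  then show ?thesis unfolding r_def by simp
qed

definition jm :: "nat \<Rightarrow> (nat \<Rightarrow> nat \<Rightarrow> real) \<Rightarrow> real mat" where
  "jm m M = mat m m (\<lambda>(i,j). M i j)"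

lemma jm_mult: "i < m \<Longrightarrow> (jm m M *\<^sub>v vec m v) $ i = (\<Sum>j<m. M i j * v j)"
  by (simp add: jm_def scalar_prod_def lessThan_atLeast0)

lemma kernel_det:
  assumes "i < m" "v i \<noteq> 0" "\<And>i. i < m \<Longrightarrow> (\<Sum>j<m. M i j * v j) = 0"
  shows "det (jm m M) = 0"
proof -
  have c: "jm m M \<in> carrier_mat m m" by (simp add: jm_def)
  have "vec m v \<noteq> 0\<^sub>v m" using assms(1,2) by (metis index_vec index_zero_vec(1))
  moreover have "jm m M *\<^sub>v vec m v = 0\<^sub>v m"
    by (rule eq_vecI, simp add: jm_mult assms(3), simp add: jm_def)
  ultimately show ?thesis unfolding det_0_iff_vec_prod_zero[OF c]
    by (intro exI[of _ "vec m v"]) auto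
qed

lemma det_kernel:
  assumes "det (jm m M) = 0"
  shows "\<exists>v. (\<exists>i<m. v i \<noteq> 0) \<and> (\<forall>i<m. (\<Sum>j<m. M i j * v j) = 0)"
proof -
  have c: "jm m M \<in> carrier_mat m m" by (simp add: jm_def)
  obtain w where w: "w \<in> carrier_vec m" "w \<noteq> 0\<^sub>v m" "jm m M *\<^sub>v w = 0\<^sub>v m"
    using assms unfolding det_0_iff_vec_prod_zero[OF c] by blast
  define v where "v i = w $ i" for i
  have wv: "w = vec m v" using w(1) unfolding v_def by auto
  have "\<exists>i<m. v i \<noteq> 0"
  proof (rule ccontr)
    assume "\<not> ?thesis"
    then have "w = 0\<^sub>v m" using w(1) unfolding v_def by (intro eq_vecI) auto
    then show False using w(2) by simp
  qed
  moreover have "(\<Sum>j<m. M i j * v j) = 0" if "i < m" for i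
    using arg_cong[OF w(3), of "\<lambda>x. x $ i"] that unfolding wv by (simp add: jm_mult)
  ultimately show ?thesis by blast
qed

lemma pf_det:
  assumes "\<And>i j. i < m \<Longrightarrow> j < m \<Longrightarrow> pf (\<lambda>s. M s i j)"
  shows "pf (\<lambda>s. det (jm m (M s)))"
proof -
  have eq: "det (jm m (M s)) = (\<Sum>p\<in>{p. p permutes {0..<m}}. signof p * (\<Prod>i=0..<m. M s i (p i)))" for s
  proof -
    have c: "jm m (M s) \<in> carrier_mat m m" by (simp add: jm_def)
    show ?thesis unfolding det_def'[OF c]
    proof (intro sum.cong refl arg_cong2[where f = "(*)"] prod.cong)
      fix p i assume "p \<in> {p. p permutes {0..<m}}" "i \<in> {0..<m}"
      then have "p i < m" by (metis atLeastLessThan_iff mem_Collect_eq permutes_in_image)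
      then show "jm m (M s) $$ (i, p i) = M s i (p i)" using \<open>i \<in> {0..<m}\<close> by (simp add: jm_def)
    qed
  qed
  show ?thesis unfolding eq
  proof (intro pf_sum pf_mult pf_const pf_prod)
    fix p i assume "p \<in> {p. p permutes {0..<m}}" "i \<in> {0..<m}"
    then have "p i < m" by (metis atLeastLessThan_iff mem_Collect_eq permutes_in_image)
    then show "pf (\<lambda>s. M s i (p i))" using assms \<open>i \<in> {0..<m}\<close> by simp
  qed
qed




theorem mainTheorem6:
  fixes n d :: nat
  assumes "even d" and "d > 2" and "n \<ge> 2"
  shows "\<not> (\<exists>\<phi>. coeff_polynomial n d \<phi> \<and>
              (\<forall>f\<in>form_interior n d (Pnd n d). \<phi> f > 0) \<and>
              (\<forall>f\<in>form_boundary n d (Pnd n d). \<phi> f = 0))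
         \<and> \<not> (\<exists>(m::nat) (A :: (nat \<Rightarrow> nat) \<Rightarrow> nat \<Rightarrow> nat \<Rightarrow> real).
              (\<forall>\<alpha>\<in>multi_idx n d. sym_mat m (A \<alpha>)) \<and>
              Pnd n d = {f \<in> forms n d. psd_mat m (pencil n d A f)} \<and>
              (\<forall>f\<in>form_interior n d (Pnd n d). pd_mat m (pencil n d A f)))"
proof -
  have n: "n \<ge> 2" by fact
  obtain k where dk: "d = 2 * k + 4"
  proof
    show "d = 2 * (d div 2 - 2) + 4" using assms(1,2) by (elim evenE) auto
  qed
  have pf_ff: "pf (\<lambda>s. ff n k s \<alpha>)" for \<alpha> unfolding ff_def[OF n] by (rule pf_tco)
  have P1: "\<not> (\<exists>\<phi>. coeff_polynomial n (2*k+4) \<phi> \<and>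
              (\<forall>f\<in>form_interior n (2*k+4) (Pnd n (2*k+4)). \<phi> f > 0) \<and>
              (\<forall>f\<in>form_boundary n (2*k+4) (Pnd n (2*k+4)). \<phi> f = 0))"
  proof
    assume "\<exists>\<phi>. coeff_polynomial n (2*k+4) \<phi> \<and>
              (\<forall>f\<in>form_interior n (2*k+4) (Pnd n (2*k+4)). \<phi> f > 0) \<and>
              (\<forall>f\<in>form_boundary n (2*k+4) (Pnd n (2*k+4)). \<phi> f = 0)"
    then obtain \<phi> where cp: "coeff_polynomial n (2*k+4) \<phi>"
      and pos: "\<forall>f\<in>form_interior n (2*k+4) (Pnd n (2*k+4)). \<phi> f > 0"
      and zer: "\<forall>f\<in>form_boundary n (2*k+4) (Pnd n (2*k+4)). \<phi> f = 0" by blast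
    obtain E c where rep: "\<forall>f\<in>forms n (2*k+4). \<phi> f = (\<Sum>\<beta>\<in>E. c \<beta> * (\<Prod>\<alpha>\<in>multi_idx n (2*k+4). f \<alpha> ^ \<beta> \<alpha>))"
      using cp unfolding coeff_polynomial_def by blast
    have "pf (\<lambda>s. \<Sum>\<beta>\<in>E. c \<beta> * (\<Prod>\<alpha>\<in>multi_idx n (2*k+4). ff n k s \<alpha> ^ \<beta> \<alpha>))"
      using pf_ff by (intro pf_sum pf_mult pf_const pf_prod pf_power)
    moreover have "\<phi> (ff n k s) = (\<Sum>\<beta>\<in>E. c \<beta> * (\<Prod>\<alpha>\<in>multi_idx n (2*k+4). ff n k s \<alpha> ^ \<beta> \<alpha>))" for s
      using rep ff_forms[OF n] by blast
    ultimately have pfphi: "pf (\<lambda>s. \<phi> (ff n k s))" by simp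
    have "\<phi> (ff n k s) = 0" if "s > 0" for s using zer ff_boundary[OF n that] by blast
    then have "\<phi> (ff n k (-1)) = 0" by (rule pf_zero[OF pfphi])
    moreover have "\<phi> (ff n k (-1)) > 0" using pos ff_interior[OF n] by blast
    ultimately show False by simp
  qed
  have P2: "\<not> (\<exists>(m::nat) (A :: (nat \<Rightarrow> nat) \<Rightarrow> nat \<Rightarrow> nat \<Rightarrow> real).
              (\<forall>\<alpha>\<in>multi_idx n (2*k+4). sym_mat m (A \<alpha>)) \<and>
              Pnd n (2*k+4) = {f \<in> forms n (2*k+4). psd_mat m (pencil n (2*k+4) A f)} \<and>
              (\<forall>f\<in>form_interior n (2*k+4) (Pnd n (2*k+4)). pd_mat m (pencil n (2*k+4) A f)))"
  proof
    assume "\<exists>(m::nat) (A :: (nat \<Rightarrow> nat) \<Rightarrow> nat \<Rightarrow> nat \<Rightarrow> real).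
              (\<forall>\<alpha>\<in>multi_idx n (2*k+4). sym_mat m (A \<alpha>)) \<and>
              Pnd n (2*k+4) = {f \<in> forms n (2*k+4). psd_mat m (pencil n (2*k+4) A f)} \<and>
              (\<forall>f\<in>form_interior n (2*k+4) (Pnd n (2*k+4)). pd_mat m (pencil n (2*k+4) A f))"
    then obtain m and A :: "(nat \<Rightarrow> nat) \<Rightarrow> nat \<Rightarrow> nat \<Rightarrow> real"
      where symA: "\<forall>\<alpha>\<in>multi_idx n (2*k+4). sym_mat m (A \<alpha>)"
      and Peq: "Pnd n (2*k+4) = {f \<in> forms n (2*k+4). psd_mat m (pencil n (2*k+4) A f)}"
      and pdi: "\<forall>f\<in>form_interior n (2*k+4) (Pnd n (2*k+4)). pd_mat m (pencil n (2*k+4) A f)"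
      by blast
    define Ms where "Ms s = pencil n (2*k+4) A (ff n k s)" for s
    have symP: "sym_mat m (pencil n (2*k+4) A f)" for f
      unfolding sym_mat_def pencil_def using symA by (auto simp: sym_mat_def intro!: sum.cong)
    have pfM: "pf (\<lambda>s. Ms s i j)" for i j
      unfolding Ms_def pencil_def using pf_ff by (intro pf_sum pf_mult pf_const)
    define gm where "gm = gam (2*k+4)"
    define H where "H = pencil n (2*k+4) A (\<lambda>\<alpha>. if \<alpha> = gm then 1 else 0)"
    define K where "K = (\<Sum>i<m. \<Sum>j<m. \<bar>H i j\<bar>)"
    have K0: "K \<ge> 0" unfolding K_def by (intro sum_nonneg) auto
    have D0: "det (jm m (Ms s)) = 0" if s: "s > 0" for s
    proof -
      have psd: "psd_mat m (Ms s)" using ff_Pnd[OF n, of k s] unfolding Peq Ms_def by blast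
      have npd: "\<not> pd_mat m (Ms s)"
      proof
        assume pd: "pd_mat m (Ms s)"
        obtain c where c: "c > 0" "\<And>v. qf m (Ms s) v \<ge> c * nsq m v"
          using pd_bound[OF symP pd[unfolded Ms_def]] unfolding Ms_def by blast
        define e where "e = c / (K + 1)"
        have e0: "e > 0" unfolding e_def using c K0 by simp
        have eK: "e * K \<le> c" unfolding e_def using c K0 by (simp add: field_simps)
        have pg: "pencil n (2*k+4) A (gg n k s e) i j = Ms s i j - e * H i j" for i j
          unfolding pencil_def Ms_def H_def gg_coeff[OF n] gm_def
          by (simp add: algebra_simps sum_subtractf sum_distrib_left)
        have "psd_mat m (pencil n (2*k+4) A (gg n k s e))"
          unfolding psd_mat_def
        proof
          fix v :: "nat \<Rightarrow> real"
          have "qf m (pencil n (2*k+4) A (gg n k s e)) v = qf m (Ms s) v - e * qf m H v"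
            unfolding pg by (simp add: algebra_simps sum_subtractf sum_distrib_left)
          moreover have "qf m H v \<le> K * nsq m v" using qf_bound[where H=H and m=m and v=v] unfolding K_def by linarith
          moreover have "nsq m v \<ge> 0" by (simp add: sum_nonneg)
          moreover note c(2)[of v]
          ultimately have "qf m (pencil n (2*k+4) A (gg n k s e)) v \<ge> c * nsq m v - e * (K * nsq m v)"
            using e0 by (smt (verit) mult_left_mono)
          moreover have "e * (K * nsq m v) \<le> c * nsq m v"
            using eK \<open>nsq m v \<ge> 0\<close> by (metis mult.assoc mult_right_mono)
          ultimately show "qf m (pencil n (2*k+4) A (gg n k s e)) v \<ge> 0" by linarith
        qed
        then have "gg n k s e \<in> Pnd n (2*k+4)" unfolding Peq using gg_forms[OF n] by blast
        then have "form_eval n (2*k+4) (gg n k s e) (ustar s) \<ge> 0" unfolding Pnd_def by blast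
        then show False using gg_neg[OF n s, of k e] e0 by simp
      qed
      then obtain v i where vi: "i < m" "v i \<noteq> 0" and q: "\<not> qf m (Ms s) v > 0"
        unfolding pd_mat_def by blast
      have "qf m (Ms s) v \<ge> 0" using psd unfolding psd_mat_def by blast
      with q have q0: "qf m (Ms s) v = 0" by simp
      show ?thesis
        by (rule kernel_det[where v=v and i=i, OF vi]) (rule psd_kernel[OF symP[of "ff n k s", folded Ms_def] psd q0])
    qed
    have pfD: "pf (\<lambda>s. det (jm m (Ms s)))" by (rule pf_det) (rule pfM)
    have "det (jm m (Ms (-1))) = 0" by (rule pf_zero[OF pfD D0])
    then obtain v where v: "\<exists>i<m. v i \<noteq> 0" and ker: "\<forall>i<m. (\<Sum>j<m. Ms (-1) i j * v j) = 0"
      using det_kernel by blast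
    have "qf m (Ms (-1)) v = (\<Sum>i<m. v i * (\<Sum>j<m. Ms (-1) i j * v j))"
      by (simp add: sum_distrib_left mult.assoc)
    also have "\<dots> = 0" using ker by simp
    finally have "qf m (Ms (-1)) v = 0" .
    moreover have "pd_mat m (Ms (-1))" unfolding Ms_def using pdi ff_interior[OF n] by blast
    ultimately show False using v unfolding pd_mat_def by fastforce
  qed
  show ?thesis unfolding dk using P1 P2 by blast
qed


end
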